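(* Let $\Sigma_0$ be an $n\times n$ symmetric positive definite matrix and apply the MRA-lp procedure (described in the context) to $\Sigma_0$. Suppose that for every $m\in\{1,\dots,M\}$ and every multi-index $(j_1,\dots,j_m)$, the matrix $\Phi_{j_1,\dots,j_m}$ satisfies $$\mathrm{R}\big(\Phi_{j_1,\dots,j_m}^{\top}\big)\cap \mathrm{R}\big(V^m_{j_1,\dots,j_m}\big)^{\perp}=\{\mathbf 0\},$$ where $\mathrm{R}(\cdot)$ denotes column space and $\perp$ the orthogonal complement (the condition being imposed at each step $m$ once $V^m_{j_1,\dots,j_m}$ has been formed). Then the procedure is well defined, $V^m_{j_1,\dots,j_m}$ is positive semidefinite for all $m=1,\dots,M$ and all multi-indices, and $\widehat V^m_{j_1,\dots,j_m}$ is positive definite for all $m=0,\dots,M$ and all multi-indices (so that $(\widehat V^m_{j_1,\dots,j_m})^{-1}$ and $(\widehat V^m_{j_1,\dots,j_m})^{-1/2}$ exist).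
   Context: Let $n\ge 1$ and $I_0=\{1,\dots,n\}$ index grid points. Fix $M\ge 0$ and integers $J_1,\dots,J_M\ge 2$. For $m\in\{0,\dots,M\}$ a multi-index is $(j_1,\dots,j_m)$ with $1\le j_i\le J_i$; for $m=0$ it is the empty multi-index, written $0$. Index sets $I_{j_1,\dots,j_m}\subseteq I_0$ are given with $I_0$ at $m=0$ and, for $m<M$, $I_{j_1,\dots,j_m}$ equal to the disjoint union of $I_{j_1,\dots,j_m,j_{m+1}}$ over $j_{m+1}=1,\dots,J_{m+1}$. Indices are ordered so that if $(j_1,\dots,j_M)$ is lexicographically greater than $(i_1,\dots,i_M)$ then $\min I_{j_1,\dots,j_M}>\max I_{i_1,\dots,i_M}$. Knot sets $K_{j_1,\dots,j_m}\subseteq I_{j_1,\dots,j_m}$ have $r_{j_1,\dots,j_m}$ elements. For each multi-index, $\Phi_{j_1,\dots,j_m}$ is a real $r'_{j_1,\dots,j_m}\times r_{j_1,\dots,j_m}$ matrix of rank $r'_{j_1,\dots,j_m}$ ($1\le r'_{j_1,\dots,j_m}\le r_{j_1,\dots,j_m}$) whose rows have Euclidean norm 1. For a matrix $C$ and index sets $A,A'$, $C[A,A']$ is the submatrix with rows in $A$ and columns in $A'$ (in increasing order). For a positive definite $S$, $S^{-1/2}$ is the inverse of its symmetric positive definite square root. MRA-lp procedure applied to an $n\times n$ symmetric positive definite $\Sigma_0$: (i) $W^0_0=\Sigma_0[I_0,K_0]$, $V^0_0=\Sigma_0[K_0,K_0]$, $\widehat V^0_0=\Phi_0V^0_0\Phi_0^\top$,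 $B_0=W^0_0\Phi_0^\top(\widehat V^0_0)^{-1/2}$. (ii) For $0\le k<m\le M$, $W^k_{j_1,\dots,j_m}$ is obtained from $W^k_{j_1,\dots,j_k}$ (whose rows are indexed by $I_{j_1,\dots,j_k}$) by keeping the rows in $I_{j_1,\dots,j_m}$, and $V^k_{j_1,\dots,j_m}$ by keeping the rows in $K_{j_1,\dots,j_m}$. (iii) For $m=1,\dots,M$ recursively: $W^m_{j_1,\dots,j_m}=\Sigma_0[I_{j_1,\dots,j_m},K_{j_1,\dots,j_m}]-\sum_{k=0}^{m-1}W^k_{j_1,\dots,j_m}\Phi_{j_1,\dots,j_k}^\top(\widehat V^k_{j_1,\dots,j_k})^{-1}\Phi_{j_1,\dots,j_k}(V^k_{j_1,\dots,j_m})^\top$; $V^m_{j_1,\dots,j_m}$ = rows of $W^m_{j_1,\dots,j_m}$ indexed by $K_{j_1,\dots,j_m}$; $\widehat V^m_{j_1,\dots,j_m}=\Phi_{j_1,\dots,j_m}V^m_{j_1,\dots,j_m}\Phi_{j_1,\dots,j_m}^\top$; $B_{j_1,\dots,j_m}=W^m_{j_1,\dots,j_m}\Phi_{j_1,\dots,j_m}^\top(\widehat V^m_{j_1,\dots,j_m})^{-1/2}$. (iv) Output $B=(B^M\;B^{M-1}\;\cdots\;B^0)$, where $B^m$ is the $n$-row block diagonal matrix with diagonal blocks $B_{j_1,\dots,j_m}$ arranged in lexicographic order of $(j_1,\dots,j_m)$ (block $B_{j_1,\dots,j_m}$ occupying rows $I_{j_1,\dots,j_m}$). *)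

theory Defs
  imports Complex_Main
begin

text \<open>A matrix is a function nat => nat => real, considered only on
explicit row/column index sets. Matrices whose rows/columns are indexed by a
subset D of the grid points (e.g. the knot set K) are indexed by the elements of
D themselves (this is the submatrix in increasing order, up to the order-preserving
bijection). Matrices with r' rows (Phi, Vhat) use row indices 0..<r'.
A multi-index (j_1,...,j_m) is the list [j_1,...,j_m]; the empty multi-index is [].\<close>

definition midx :: "(nat \<Rightarrow> nat) \<Rightarrow> nat \<Rightarrow> nat list set" where
  "midx J m = {js. length js = m \<and> (\<forall>i<m. 1 \<le> js ! i \<and> js ! i \<le> J (Suc i))}"

definition sym_on :: "nat set \<Rightarrow> (nat \<Rightarrow> nat \<Rightarrow> real) \<Rightarrow> bool" where
  "sym_on D A = (\<forall>i\<in>D. \<forall>j\<in>D. A i j = A j i)"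

definition quad_form :: "nat set \<Rightarrow> (nat \<Rightarrow> nat \<Rightarrow> real) \<Rightarrow> (nat \<Rightarrow> real) \<Rightarrow> real" where
  "quad_form D A x = (\<Sum>i\<in>D. \<Sum>j\<in>D. x i * A i j * x j)"

definition psd_on :: "nat set \<Rightarrow> (nat \<Rightarrow> nat \<Rightarrow> real) \<Rightarrow> bool" where
  "psd_on D A = (sym_on D A \<and> (\<forall>x. quad_form D A x \<ge> 0))"

definition pd_on :: "nat set \<Rightarrow> (nat \<Rightarrow> nat \<Rightarrow> real) \<Rightarrow> bool" where
  "pd_on D A = (sym_on D A \<and> (\<forall>x. (\<exists>i\<in>D. x i \<noteq> 0) \<longrightarrow> quad_form D A x > 0))"

definition vecs :: "nat set \<Rightarrow> (nat \<Rightarrow> real) set" where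
  "vecs D = {x. \<forall>i. i \<notin> D \<longrightarrow> x i = 0}"

definition col_space :: "(nat \<Rightarrow> nat \<Rightarrow> real) \<Rightarrow> nat set \<Rightarrow> nat set \<Rightarrow> (nat \<Rightarrow> real) set" where
  "col_space A R C = {x \<in> vecs R. \<exists>y \<in> vecs C. \<forall>i\<in>R. x i = (\<Sum>c\<in>C. A i c * y c)}"

definition ortho_compl :: "nat set \<Rightarrow> (nat \<Rightarrow> real) set \<Rightarrow> (nat \<Rightarrow> real) set" where
  "ortho_compl D S = {x \<in> vecs D. \<forall>s\<in>S. (\<Sum>i\<in>D. x i * s i) = 0}"

text \<open>matrix inverse on {0..<d} (total: zero matrix if no inverse exists)\<close>
definition is_inv :: "nat \<Rightarrow> (nat \<Rightarrow> nat \<Rightarrow> real) \<Rightarrow> (nat \<Rightarrow> nat \<Rightarrow> real) \<Rightarrow> bool" where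
  "is_inv d A B = (\<forall>p<d. \<forall>q<d.
      (\<Sum>t<d. A p t * B t q) = (if p = q then 1 else 0) \<and>
      (\<Sum>t<d. B p t * A t q) = (if p = q then 1 else 0))"

definition minv :: "nat \<Rightarrow> (nat \<Rightarrow> nat \<Rightarrow> real) \<Rightarrow> (nat \<Rightarrow> nat \<Rightarrow> real)" where
  "minv d A = (if \<exists>B. is_inv d A B then (SOME B. is_inv d A B) else (\<lambda>_ _. 0))"

text \<open>Vhat = Phi V Phi^T, where V = rows of W indexed by K (columns of W are indexed by K)\<close>
definition vhat :: "(nat list \<Rightarrow> nat set) \<Rightarrow> (nat list \<Rightarrow> nat \<Rightarrow> nat \<Rightarrow> real)
    \<Rightarrow> (nat \<Rightarrow> nat \<Rightarrow> real) \<Rightarrow> nat list \<Rightarrow> nat \<Rightarrow> nat \<Rightarrow> real" where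
  "vhat K Phi W js p q = (\<Sum>a\<in>K js. \<Sum>b\<in>K js. Phi js p a * W a b * Phi js q b)"

text \<open>correction term  W^k Phi^T (Vhat^k)^(-1) Phi (V^k)^T  contributed by the prefix pre
  (entry (i,l): row i, column l)\<close>
definition corr :: "(nat list \<Rightarrow> nat set) \<Rightarrow> (nat list \<Rightarrow> nat \<Rightarrow> nat \<Rightarrow> real) \<Rightarrow> (nat list \<Rightarrow> nat)
    \<Rightarrow> (nat \<Rightarrow> nat \<Rightarrow> real) \<Rightarrow> nat list \<Rightarrow> nat \<Rightarrow> nat \<Rightarrow> real" where
  "corr K Phi rp W pre i l =
     (let Vi = minv (rp pre) (vhat K Phi W pre) in
      \<Sum>a\<in>K pre. \<Sum>b\<in>K pre.
        W i a * (\<Sum>p<rp pre. \<Sum>q<rp pre. Phi pre p a * Vi p q * Phi pre q b) * W l b)"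

text \<open>Wtab m js = W^{|js|}_{js} for all multi-indices of length at most m\<close>
primrec Wtab :: "(nat \<Rightarrow> nat \<Rightarrow> real) \<Rightarrow> (nat list \<Rightarrow> nat set) \<Rightarrow> (nat list \<Rightarrow> nat \<Rightarrow> nat \<Rightarrow> real)
    \<Rightarrow> (nat list \<Rightarrow> nat) \<Rightarrow> nat \<Rightarrow> nat list \<Rightarrow> nat \<Rightarrow> nat \<Rightarrow> real" where
  "Wtab S K Phi rp 0 = (\<lambda>js. S)"
| "Wtab S K Phi rp (Suc m) = (\<lambda>js.
     if length js \<le> m then Wtab S K Phi rp m js
     else (\<lambda>i l. S i l - (\<Sum>k<length js.
              corr K Phi rp (Wtab S K Phi rp m (take k js)) (take k js) i l)))"

text \<open>MRA-lp: W^m_{js} (rows: grid points in I_js, columns: knots K_js);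
  V^m_{js} is the same function restricted to rows in K_js; Vhat^m_{js}.\<close>
definition mraW :: "(nat \<Rightarrow> nat \<Rightarrow> real) \<Rightarrow> (nat list \<Rightarrow> nat set) \<Rightarrow> (nat list \<Rightarrow> nat \<Rightarrow> nat \<Rightarrow> real)
    \<Rightarrow> (nat list \<Rightarrow> nat) \<Rightarrow> nat list \<Rightarrow> nat \<Rightarrow> nat \<Rightarrow> real" where
  "mraW S K Phi rp js = Wtab S K Phi rp (length js) js"

definition mraVhat :: "(nat \<Rightarrow> nat \<Rightarrow> real) \<Rightarrow> (nat list \<Rightarrow> nat set) \<Rightarrow> (nat list \<Rightarrow> nat \<Rightarrow> nat \<Rightarrow> real)
    \<Rightarrow> (nat list \<Rightarrow> nat) \<Rightarrow> nat list \<Rightarrow> nat \<Rightarrow> nat \<Rightarrow> real" where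
  "mraVhat S K Phi rp js = vhat K Phi (mraW S K Phi rp js) js"

end

theory Submission
  imports Defs "Jordan_Normal_Form.Determinant"
begin

lemma pd_inv_exists:
  assumes pd: "pd_on {..<d} A"
  shows "\<exists>B. is_inv d A B"
proof -
  define Mx where "Mx = mat d d (\<lambda>(p,q). A p q)"
  have Mc: "Mx \<in> carrier_mat d d" unfolding Mx_def by simp
  have "det Mx \<noteq> 0"
  proof
    assume "det Mx = 0"
    then obtain v where v: "v \<in> carrier_vec d" "v \<noteq> 0\<^sub>v d" "Mx *\<^sub>v v = 0\<^sub>v d"
      using det_0_iff_vec_prod_zero_field[OF Mc] by blast
    obtain p where p: "p < d" "v $ p \<noteq> 0"
      using v(1,2) by (metis eq_vecI carrier_vecD index_zero_vec(1,2))
    define x where "x = (\<lambda>i. v $ i)"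
    have row0: "(\<Sum>j<d. A i j * x j) = 0" if "i < d" for i
    proof -
      have "(Mx *\<^sub>v v) $ i = 0" using v(3) that by simp
      thus ?thesis using that v(1) unfolding Mx_def x_def
        by (simp add: scalar_prod_def lessThan_atLeast0 mult.commute)
    qed
    have "quad_form {..<d} A x = (\<Sum>i<d. x i * (\<Sum>j<d. A i j * x j))"
      unfolding quad_form_def by (simp add: sum_distrib_left mult.assoc)
    also have "\<dots> = 0" using row0 by simp
    finally have "quad_form {..<d} A x = 0" .
    moreover have "quad_form {..<d} A x > 0"
      using pd p unfolding pd_on_def x_def by auto
    ultimately show False by simp
  qed
  from det_non_zero_imp_unit[OF Mc this, of "()"]
  obtain B where B: "B \<in> carrier_mat d d" "B * Mx = 1\<^sub>m d" "Mx * B = 1\<^sub>m d"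
    unfolding Units_def ring_mat_def by auto
  have "is_inv d A (\<lambda>p q. B $$ (p,q))"
    unfolding is_inv_def
  proof (intro allI impI conjI)
    fix p q assume pq: "p < d" "q < d"
    have "(Mx * B) $$ (p,q) = (if p = q then 1 else 0)" using B(3) pq by simp
    thus "(\<Sum>t<d. A p t * B $$ (t, q)) = (if p = q then 1 else 0)"
      using pq B(1) unfolding Mx_def by (simp add: scalar_prod_def lessThan_atLeast0)
    have "(B * Mx) $$ (p,q) = (if p = q then 1 else 0)" using B(2) pq B(1) by simp
    thus "(\<Sum>t<d. B $$ (p, t) * A t q) = (if p = q then 1 else 0)"
      using pq B(1) unfolding Mx_def by (simp add: scalar_prod_def lessThan_atLeast0)
  qed
  thus ?thesis by blast
qed


lemma minv_is_inv: "pd_on {..<d} A \<Longrightarrow> is_inv d A (minv d A)"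
  unfolding minv_def using pd_inv_exists[of d A] someI_ex[of "is_inv d A"] by auto

lemma sum_delta_r: "p < (d::nat) \<Longrightarrow> (\<Sum>t<d. f t * (if t = p then 1 else 0)) = (f p :: real)"
proof -
  assume "p < d"
  have "(\<Sum>t<d. f t * (if t = p then 1 else 0)) = (\<Sum>t<d. if t = p then f t else 0)"
    by (intro sum.cong) auto
  also have "\<dots> = f p" using \<open>p < d\<close> by (simp add: sum.delta)
  finally show ?thesis .
qed

lemma sum_delta_l: "p < (d::nat) \<Longrightarrow> (\<Sum>t<d. (if t = p then 1 else 0) * f t) = (f p :: real)"
  using sum_delta_r[of p d f] by (simp add: mult.commute)

lemma inv_sym:
  assumes inv: "is_inv d A B" and sym: "sym_on {..<d} A" and pq: "p < d" "q < d"
  shows "B p q = B q p"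
proof -
  have L: "(\<Sum>t<d. B t q * A t s) = (if s = q then 1 else 0)" if "s < d" for s
  proof -
    have "(\<Sum>t<d. B t q * A t s) = (\<Sum>t<d. A s t * B t q)"
      using sym that by (intro sum.cong) (auto simp: sym_on_def mult.commute)
    thus ?thesis using inv that pq unfolding is_inv_def by auto
  qed
  have "B q p = (\<Sum>s<d. (if s = q then 1 else 0) * B s p)" using pq by (simp add: sum_delta_l)
  also have "\<dots> = (\<Sum>s<d. (\<Sum>t<d. B t q * A t s) * B s p)" using L by (intro sum.cong) auto
  also have "\<dots> = (\<Sum>t<d. B t q * (\<Sum>s<d. A t s * B s p))"
    by (simp add: sum_distrib_left sum_distrib_right mult.assoc) (rule sum.swap)
  also have "\<dots> = (\<Sum>t<d. B t q * (if t = p then 1 else 0))"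
    using inv pq unfolding is_inv_def by (intro sum.cong) auto
  also have "\<dots> = B p q" by (rule sum_delta_r[OF pq(1)])
  finally show ?thesis by simp
qed


lemma quad_diff:
  assumes sym: "sym_on D C" and fin: "finite D"
  shows "quad_form D C (\<lambda>i. x i - y i) = quad_form D C x - 2 * (\<Sum>i\<in>D. \<Sum>j\<in>D. y i * C i j * x j) + quad_form D C y"
proof -
  have e: "(\<Sum>i\<in>D. \<Sum>j\<in>D. x i * C i j * y j) = (\<Sum>i\<in>D. \<Sum>j\<in>D. y i * C i j * x j)"
  proof -
    have "(\<Sum>i\<in>D. \<Sum>j\<in>D. x i * C i j * y j) = (\<Sum>j\<in>D. \<Sum>i\<in>D. x i * C i j * y j)" by (rule sum.swap)
    also have "\<dots> = (\<Sum>j\<in>D. \<Sum>i\<in>D. y j * C j i * x i)"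
      using sym unfolding sym_on_def by (intro sum.cong refl) (auto simp: mult_ac)
    finally show ?thesis .
  qed
  have "quad_form D C (\<lambda>i. x i - y i) = (\<Sum>i\<in>D. \<Sum>j\<in>D. x i * C i j * x j - x i * C i j * y j - y i * C i j * x j + y i * C i j * y j)"
    unfolding quad_form_def by (intro sum.cong refl) (simp add: algebra_simps)
  also have "\<dots> = quad_form D C x - (\<Sum>i\<in>D. \<Sum>j\<in>D. x i * C i j * y j) - (\<Sum>i\<in>D. \<Sum>j\<in>D. y i * C i j * x j) + quad_form D C y"
    unfolding quad_form_def by (simp add: sum.distrib sum_subtractf)
  finally show ?thesis using e by simp
qed

lemma sum4_swap:
  "(\<Sum>a\<in>A. \<Sum>b\<in>B. \<Sum>i\<in>I. \<Sum>l\<in>L. f a b i l) = (\<Sum>i\<in>I. \<Sum>l\<in>L. \<Sum>a\<in>A. \<Sum>b\<in>B. f a b i l)"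
proof -
  have "(\<Sum>a\<in>A. \<Sum>b\<in>B. \<Sum>i\<in>I. \<Sum>l\<in>L. f a b i l) = (\<Sum>a\<in>A. \<Sum>i\<in>I. \<Sum>b\<in>B. \<Sum>l\<in>L. f a b i l)"
    by (intro sum.cong refl) (rule sum.swap)
  also have "\<dots> = (\<Sum>i\<in>I. \<Sum>a\<in>A. \<Sum>b\<in>B. \<Sum>l\<in>L. f a b i l)" by (rule sum.swap)
  also have "\<dots> = (\<Sum>i\<in>I. \<Sum>a\<in>A. \<Sum>l\<in>L. \<Sum>b\<in>B. f a b i l)"
    by (intro sum.cong refl) (rule sum.swap)
  also have "\<dots> = (\<Sum>i\<in>I. \<Sum>l\<in>L. \<Sum>a\<in>A. \<Sum>b\<in>B. f a b i l)"
    by (intro sum.cong refl) (rule sum.swap)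
  finally show ?thesis .
qed

lemma schur_psd:
  fixes D K :: "nat set" and C Ph :: "nat \<Rightarrow> nat \<Rightarrow> real" and r :: nat
  defines "V \<equiv> (\<lambda>p q. \<Sum>a\<in>K. \<Sum>b\<in>K. Ph p a * C a b * Ph q b)"
  defines "Vi \<equiv> minv r V"
  assumes fin: "finite D" and KD: "K \<subseteq> D" and psd: "psd_on D C" and pd: "pd_on {..<r} V"
  shows "psd_on D (\<lambda>i l. C i l - (\<Sum>a\<in>K. \<Sum>b\<in>K. C i a * (\<Sum>p<r. \<Sum>q<r. Ph p a * Vi p q * Ph q b) * C l b))"
proof -
  have finK: "finite K" using fin KD finite_subset by blast
  have inv: "is_inv r V Vi" unfolding Vi_def using minv_is_inv[OF pd] .
  have Vsym: "sym_on {..<r} V" using pd unfolding pd_on_def by simp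
  have Visym: "Vi p q = Vi q p" if "p < r" "q < r" for p q using inv_sym[OF inv Vsym that] .
  have Csym: "C i j = C j i" if "i \<in> D" "j \<in> D" for i j using psd that unfolding psd_on_def sym_on_def by auto
  define G where "G = (\<lambda>a b. \<Sum>p<r. \<Sum>q<r. Ph p a * Vi p q * Ph q b)"
  have Gsym: "G a b = G b a" for a b
  proof -
    have "G a b = (\<Sum>q<r. \<Sum>p<r. Ph p a * Vi p q * Ph q b)" unfolding G_def by (rule sum.swap)
    also have "\<dots> = G b a" unfolding G_def using Visym by (intro sum.cong refl) (auto simp: mult_ac)
    finally show ?thesis .
  qed
  define cr where "cr = (\<lambda>i l. \<Sum>a\<in>K. \<Sum>b\<in>K. C i a * G a b * C l b)"
  have crsym: "cr i l = cr l i" for i l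
  proof -
    have "cr l i = (\<Sum>b\<in>K. \<Sum>a\<in>K. C l a * G a b * C i b)" unfolding cr_def by (rule sum.swap)
    also have "\<dots> = cr i l" unfolding cr_def using Gsym by (intro sum.cong refl) (auto simp: mult_ac)
    finally show ?thesis by simp
  qed
  have sym_new: "sym_on D (\<lambda>i l. C i l - cr i l)"
    unfolding sym_on_def using Csym crsym by auto
  have quad_new: "quad_form D (\<lambda>i l. C i l - cr i l) x \<ge> 0" for x
  proof -
    define w where "w = (\<lambda>a. \<Sum>i\<in>D. x i * C i a)"
    define v where "v = (\<lambda>p. \<Sum>a\<in>K. Ph p a * w a)"
    define u where "u = (\<lambda>p. \<Sum>q<r. Vi p q * v q)"
    define y where "y = (\<lambda>i. if i \<in> K then (\<Sum>p<r. Ph p i * u p) else 0)"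
    define U where "U = (\<Sum>p<r. u p * v p)"
    have q1: "quad_form D cr x = U"
    proof -
      have "quad_form D cr x = (\<Sum>i\<in>D. \<Sum>l\<in>D. \<Sum>a\<in>K. \<Sum>b\<in>K. (x i * C i a) * G a b * (x l * C l b))"
        unfolding quad_form_def cr_def by (simp add: sum_distrib_left sum_distrib_right mult_ac)
      also have "\<dots> = (\<Sum>a\<in>K. \<Sum>b\<in>K. \<Sum>i\<in>D. \<Sum>l\<in>D. (x i * C i a) * G a b * (x l * C l b))"
        by (rule sum4_swap[symmetric])
      also have "\<dots> = (\<Sum>a\<in>K. \<Sum>b\<in>K. w a * G a b * w b)"
        unfolding w_def by (simp add: sum_distrib_left sum_distrib_right mult_ac)
      also have "\<dots> = (\<Sum>a\<in>K. \<Sum>b\<in>K. \<Sum>p<r. \<Sum>q<r. (w a * Ph p a) * Vi p q * (Ph q b * w b))"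
        unfolding G_def by (simp add: sum_distrib_left sum_distrib_right mult_ac)
      also have "\<dots> = (\<Sum>p<r. \<Sum>q<r. \<Sum>a\<in>K. \<Sum>b\<in>K. (w a * Ph p a) * Vi p q * (Ph q b * w b))"
        by (rule sum4_swap)
      also have "\<dots> = (\<Sum>p<r. \<Sum>q<r. v p * Vi p q * v q)"
        unfolding v_def by (simp add: sum_distrib_left sum_distrib_right mult_ac)
      also have "\<dots> = U"
        unfolding U_def u_def by (simp add: sum_distrib_left sum_distrib_right mult_ac)
      finally show ?thesis .
    qed
    have q2: "quad_form D (\<lambda>i l. C i l - cr i l) x = quad_form D C x - quad_form D cr x"
      unfolding quad_form_def by (simp add: algebra_simps sum_subtractf)
    have q3: "(\<Sum>i\<in>D. \<Sum>j\<in>D. y i * C i j * x j) = U"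
    proof -
      have "(\<Sum>i\<in>D. \<Sum>j\<in>D. y i * C i j * x j) = (\<Sum>i\<in>K. \<Sum>j\<in>D. y i * C i j * x j)"
        by (rule sum.mono_neutral_right[OF fin KD]) (auto simp: y_def)
      also have "\<dots> = (\<Sum>i\<in>K. y i * w i)"
        unfolding w_def using Csym KD
        by (intro sum.cong refl) (auto simp: sum_distrib_left mult_ac intro!: sum.cong)
      also have "\<dots> = (\<Sum>i\<in>K. \<Sum>p<r. u p * (Ph p i * w i))"
        unfolding y_def by (simp add: sum_distrib_left sum_distrib_right mult_ac)
      also have "\<dots> = (\<Sum>p<r. u p * v p)"
        unfolding v_def by (subst sum.swap) (simp add: sum_distrib_left)
      finally show ?thesis unfolding U_def .
    qed
    have Vu: "(\<Sum>q<r. V p q * u q) = v p" if "p < r" for p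
    proof -
      have "(\<Sum>q<r. V p q * u q) = (\<Sum>s<r. (\<Sum>q<r. V p q * Vi q s) * v s)"
        unfolding u_def by (simp add: sum_distrib_left sum_distrib_right mult_ac) (rule sum.swap)
      also have "\<dots> = (\<Sum>s<r. (if s = p then 1 else 0) * v s)"
        using inv that unfolding is_inv_def by (intro sum.cong refl) auto
      also have "\<dots> = v p" by (rule sum_delta_l[OF that])
      finally show ?thesis .
    qed
    have q4: "quad_form D C y = U"
    proof -
      have "quad_form D C y = (\<Sum>i\<in>K. \<Sum>j\<in>D. y i * C i j * y j)"
        unfolding quad_form_def by (rule sum.mono_neutral_right[OF fin KD]) (auto simp: y_def)
      also have "\<dots> = (\<Sum>i\<in>K. \<Sum>j\<in>K. y i * C i j * y j)"
        by (intro sum.cong refl sum.mono_neutral_right[OF fin KD]) (auto simp: y_def)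
      also have "\<dots> = (\<Sum>i\<in>K. \<Sum>j\<in>K. \<Sum>p<r. \<Sum>q<r. u p * (Ph p i * C i j * Ph q j) * u q)"
        unfolding y_def by (simp add: sum_distrib_left sum_distrib_right mult_ac)
      also have "\<dots> = (\<Sum>p<r. \<Sum>q<r. \<Sum>i\<in>K. \<Sum>j\<in>K. u p * (Ph p i * C i j * Ph q j) * u q)"
        by (rule sum4_swap)
      also have "\<dots> = (\<Sum>p<r. u p * (\<Sum>q<r. V p q * u q))"
        unfolding V_def by (simp add: sum_distrib_left sum_distrib_right mult_ac)
      also have "\<dots> = U" unfolding U_def using Vu by (intro sum.cong refl) auto
      finally show ?thesis .
    qed
    have "quad_form D C (\<lambda>i. x i - y i) \<ge> 0" using psd unfolding psd_on_def by blast
    also have "quad_form D C (\<lambda>i. x i - y i) = quad_form D (\<lambda>i l. C i l - cr i l) x"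
      using quad_diff[OF _ fin, of C x y] psd q1 q2 q3 q4 unfolding psd_on_def by simp
    finally show ?thesis .
  qed
  show ?thesis using sym_new quad_new unfolding psd_on_def cr_def G_def by blast
qed


lemma quad_restrict:
  assumes fin: "finite D" and KD: "K \<subseteq> D"
  shows "quad_form D W (\<lambda>i. if i \<in> K then x i else 0) = quad_form K W x"
proof -
  have "quad_form D W (\<lambda>i. if i \<in> K then x i else 0)
      = (\<Sum>i\<in>K. \<Sum>j\<in>D. (if i \<in> K then x i else 0) * W i j * (if j \<in> K then x j else 0))"
    unfolding quad_form_def by (rule sum.mono_neutral_right[OF fin KD]) auto
  also have "\<dots> = (\<Sum>i\<in>K. \<Sum>j\<in>K. (if i \<in> K then x i else 0) * W i j * (if j \<in> K then x j else 0))"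
    by (intro sum.cong refl sum.mono_neutral_right[OF fin KD]) auto
  also have "\<dots> = quad_form K W x" unfolding quad_form_def by (intro sum.cong refl) auto
  finally show ?thesis .
qed

lemma psd_restrict:
  assumes fin: "finite D" and KD: "K \<subseteq> D" and psd: "psd_on D W"
  shows "psd_on K W"
  using psd quad_restrict[OF fin KD, of W] KD unfolding psd_on_def sym_on_def by (metis subsetD)

lemma pd_psd: "pd_on D W \<Longrightarrow> psd_on D W"
proof -
  assume pd: "pd_on D W"
  have "quad_form D W x \<ge> 0" for x
  proof (cases "\<exists>i\<in>D. x i \<noteq> 0")
    case True thus ?thesis using pd unfolding pd_on_def by force
  next
    case False thus ?thesis unfolding quad_form_def by simp
  qed
  thus ?thesis using pd unfolding pd_on_def psd_on_def by blast
qed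

lemma psd_zero_bil:
  assumes fin: "finite K" and psd: "psd_on K W" and q0: "quad_form K W x = 0"
  shows "(\<Sum>i\<in>K. \<Sum>c\<in>K. x i * W i c * y c) = 0"
proof -
  have sym: "sym_on K W" using psd unfolding psd_on_def by simp
  define b where "b = (\<Sum>i\<in>K. \<Sum>j\<in>K. y i * W i j * x j)"
  define a where "a = quad_form K W y"
  have a0: "a \<ge> 0" using psd unfolding a_def psd_on_def by simp
  have h: "- 2 * t * b + t^2 * a \<ge> 0" for t
  proof -
    have "0 \<le> quad_form K W (\<lambda>i. x i - t * y i)" using psd unfolding psd_on_def by simp
    also have "\<dots> = quad_form K W x - 2 * (\<Sum>i\<in>K. \<Sum>j\<in>K. (t * y i) * W i j * x j) + quad_form K W (\<lambda>i. t * y i)"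
      by (rule quad_diff[OF sym fin])
    also have "(\<Sum>i\<in>K. \<Sum>j\<in>K. (t * y i) * W i j * x j) = t * b"
      unfolding b_def by (simp add: sum_distrib_left mult_ac)
    also have "quad_form K W (\<lambda>i. t * y i) = t^2 * a"
      unfolding a_def quad_form_def by (simp add: sum_distrib_left mult_ac power2_eq_square)
    finally show ?thesis using q0 by simp
  qed
  have "b = 0"
  proof (rule ccontr)
    assume bn: "b \<noteq> 0"
    define t where "t = b / (a + 1)"
    have "- 2 * t * b + t^2 * a \<ge> 0" by (rule h)
    hence "(a+1)^2 * (- 2 * t * b + t^2 * a) \<ge> 0" by simp
    moreover have "(a+1)^2 * (- 2 * t * b + t^2 * a) = -(b^2 * (a + 2))"
    proof -
      have st: "(a+1)*t = b" unfolding t_def using a0 by simp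
      have "(a+1)^2 * (- 2 * t * b + t^2 * a) = -2*(a+1)*((a+1)*t)*b + ((a+1)*t)^2 * a"
        by (simp add: algebra_simps power2_eq_square)
      also have "\<dots> = -(b^2 * (a + 2))" unfolding st by (simp add: algebra_simps power2_eq_square)
      finally show ?thesis .
    qed
    moreover have "b^2 > 0" using bn by simp
    ultimately show False using a0 by (smt (verit) mult_pos_pos)
  qed
  have "(\<Sum>i\<in>K. \<Sum>c\<in>K. x i * W i c * y c) = (\<Sum>c\<in>K. \<Sum>i\<in>K. x i * W i c * y c)" by (rule sum.swap)
  also have "\<dots> = b" unfolding b_def using sym unfolding sym_on_def
    by (intro sum.cong refl) (auto simp: mult_ac)
  finally show ?thesis using \<open>b = 0\<close> by simp
qed

lemma vhat_pd_gen:
  assumes fin: "finite K" and sym: "sym_on K W" and pos: "\<forall>x. quad_form K W x \<ge> 0"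
    and rank: "\<forall>y. (\<forall>l\<in>K. (\<Sum>p<r. y p * Ph p l) = 0) \<longrightarrow> (\<forall>p<r. y p = 0)"
    and key: "\<forall>x\<in>col_space (\<lambda>l p. Ph p l) K {..<r}. quad_form K W x = 0 \<longrightarrow> (\<forall>l\<in>K. x l = 0)"
  shows "pd_on {..<r} (\<lambda>p q. \<Sum>a\<in>K. \<Sum>b\<in>K. Ph p a * W a b * Ph q b)"
proof -
  let ?V = "\<lambda>p q. \<Sum>a\<in>K. \<Sum>b\<in>K. Ph p a * W a b * Ph q b"
  have vs: "sym_on {..<r} ?V"
    unfolding sym_on_def
  proof (intro ballI)
    fix p q
    have "?V p q = (\<Sum>b\<in>K. \<Sum>a\<in>K. Ph p a * W a b * Ph q b)" by (rule sum.swap)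
    also have "\<dots> = ?V q p" using sym unfolding sym_on_def by (intro sum.cong refl) (auto simp: mult_ac)
    finally show "?V p q = ?V q p" .
  qed
  have "quad_form {..<r} ?V y > 0" if ne: "\<exists>p\<in>{..<r}. y p \<noteq> 0" for y
  proof -
    define x where "x = (\<lambda>l. if l \<in> K then (\<Sum>p<r. y p * Ph p l) else 0)"
    have eq: "quad_form {..<r} ?V y = quad_form K W x"
    proof -
      have "quad_form {..<r} ?V y = (\<Sum>p<r. \<Sum>q<r. \<Sum>a\<in>K. \<Sum>b\<in>K. (y p * Ph p a) * W a b * (Ph q b * y q))"
        unfolding quad_form_def by (simp add: sum_distrib_left sum_distrib_right mult_ac)
      also have "\<dots> = (\<Sum>a\<in>K. \<Sum>b\<in>K. \<Sum>p<r. \<Sum>q<r. (y p * Ph p a) * W a b * (Ph q b * y q))"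
        by (rule sum4_swap[symmetric])
      also have "\<dots> = (\<Sum>a\<in>K. \<Sum>b\<in>K. (\<Sum>p<r. y p * Ph p a) * W a b * (\<Sum>q<r. Ph q b * y q))"
        by (simp add: sum_distrib_left sum_distrib_right mult_ac)
      also have "\<dots> = quad_form K W x" unfolding quad_form_def x_def
        by (intro sum.cong refl) (auto simp: mult_ac)
      finally show ?thesis .
    qed
    have xc: "x \<in> col_space (\<lambda>l p. Ph p l) K {..<r}"
    proof -
      have "x \<in> vecs K" unfolding vecs_def x_def by simp
      moreover have "(\<lambda>p. if p < r then y p else 0) \<in> vecs {..<r}" unfolding vecs_def by simp
      moreover have "\<forall>i\<in>K. x i = (\<Sum>c\<in>{..<r}. Ph c i * (if c < r then y c else 0))"
        unfolding x_def by (auto simp: mult_ac intro!: sum.cong)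
      ultimately show ?thesis unfolding col_space_def mem_Collect_eq by (intro conjI bexI)
    qed
    have "quad_form K W x \<noteq> 0"
    proof
      assume "quad_form K W x = 0"
      hence "\<forall>l\<in>K. x l = 0" using key xc by blast
      hence "\<forall>l\<in>K. (\<Sum>p<r. y p * Ph p l) = 0" unfolding x_def by simp
      hence "\<forall>p<r. y p = 0" using rank by blast
      thus False using ne by auto
    qed
    thus ?thesis using pos eq by (metis order_le_less)
  qed
  thus ?thesis using vs unfolding pd_on_def by blast
qed


lemma Wtab_stable: "length js \<le> m \<Longrightarrow> Wtab S K Phi rp m js = Wtab S K Phi rp (length js) js"
proof (induction m)
  case 0 thus ?case by simp
next
  case (Suc m)
  show ?case
  proof (cases "length js \<le> m")
    case True thus ?thesis using Suc by simp
  next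
    case False hence "length js = Suc m" using Suc.prems by simp
    thus ?thesis by simp
  qed
qed

lemma mraW_nil: "mraW S K Phi rp [] = S"
  unfolding mraW_def by simp

lemma mraW_cons:
  assumes "js \<noteq> []"
  shows "mraW S K Phi rp js = (\<lambda>i l. S i l - (\<Sum>k<length js.
      corr K Phi rp (mraW S K Phi rp (take k js)) (take k js) i l))"
proof -
  obtain m where m: "length js = Suc m" using assms by (cases js) auto
  have "mraW S K Phi rp js = (\<lambda>i l. S i l - (\<Sum>k<length js.
      corr K Phi rp (Wtab S K Phi rp m (take k js)) (take k js) i l))"
    unfolding mraW_def
  proof -
    have "Wtab S K Phi rp (length js) js = Wtab S K Phi rp (Suc m) js" using m by simp
    also have "\<dots> = (\<lambda>i l. S i l - (\<Sum>k<length js.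
      corr K Phi rp (Wtab S K Phi rp m (take k js)) (take k js) i l))"
      by (subst Wtab.simps(2), rule if_not_P) (use m in simp)
    finally show "Wtab S K Phi rp (length js) js = (\<lambda>i l. S i l - (\<Sum>k<length js.
      corr K Phi rp (Wtab S K Phi rp m (take k js)) (take k js) i l))" .
  qed
  also have "\<dots> = (\<lambda>i l. S i l - (\<Sum>k<length js.
      corr K Phi rp (mraW S K Phi rp (take k js)) (take k js) i l))"
  proof -
    have "Wtab S K Phi rp m (take k js) = mraW S K Phi rp (take k js)" if "k < length js" for k
      unfolding mraW_def by (rule Wtab_stable) (use that m in simp)
    thus ?thesis by (intro ext arg_cong2[where f="(-)"] refl sum.cong) auto
  qed
  finally show ?thesis .
qed

lemma mraW_step:
  assumes "js \<noteq> []"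
  shows "mraW S K Phi rp js = (\<lambda>i l. mraW S K Phi rp (butlast js) i l
     - corr K Phi rp (mraW S K Phi rp (butlast js)) (butlast js) i l)"
proof -
  obtain m where m: "length js = Suc m" using assms by (cases js) auto
  have tb: "take m js = butlast js" using m by (simp add: butlast_conv_take)
  have tk: "take k (butlast js) = take k js" if "k < m" for k
    using that m by (simp add: take_butlast)
  have lb: "length (butlast js) = m" using m by simp
  have mb: "mraW S K Phi rp (butlast js) = (\<lambda>i l. S i l - (\<Sum>k<m.
      corr K Phi rp (mraW S K Phi rp (take k js)) (take k js) i l))"
  proof (cases "m = 0")
    case True
    hence "butlast js = []" using lb by (metis length_0_conv)
    thus ?thesis using True by (simp add: mraW_nil)
  next
    case False
    hence "butlast js \<noteq> []" using lb by (metis list.size(3))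
    from mraW_cons[OF this] show ?thesis unfolding lb using tk
      by (intro ext arg_cong2[where f="(-)"] refl sum.cong) auto
  qed
  show ?thesis
  proof (intro ext)
    fix i l
    have "mraW S K Phi rp js i l = S i l - (\<Sum>k<Suc m.
      corr K Phi rp (mraW S K Phi rp (take k js)) (take k js) i l)"
      using mraW_cons[OF assms] m by simp
    also have "\<dots> = S i l - (\<Sum>k<m.
      corr K Phi rp (mraW S K Phi rp (take k js)) (take k js) i l)
      - corr K Phi rp (mraW S K Phi rp (butlast js)) (butlast js) i l"
      by (simp add: tb)
    also have "S i l - (\<Sum>k<m.
      corr K Phi rp (mraW S K Phi rp (take k js)) (take k js) i l) = mraW S K Phi rp (butlast js) i l"
      using fun_cong[OF fun_cong[OF mb, of i], of l] by simp
    finally show "mraW S K Phi rp js i l = mraW S K Phi rp (butlast js) i l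
     - corr K Phi rp (mraW S K Phi rp (butlast js)) (butlast js) i l" .
  qed
qed

lemma midx_butlast:
  assumes "js \<in> midx J (Suc m)"
  shows "butlast js \<in> midx J m" "last js \<in> {1..J (Suc m)}" "js = butlast js @ [last js]"
proof -
  have L: "length js = Suc m" and B: "\<forall>i<Suc m. 1 \<le> js ! i \<and> js ! i \<le> J (Suc i)"
    using assms unfolding midx_def by auto
  have ne: "js \<noteq> []" using L by auto
  show "butlast js \<in> midx J m" unfolding midx_def using L B by (auto simp: nth_butlast)
  show "last js \<in> {1..J (Suc m)}" using L B ne by (auto simp: last_conv_nth)
  show "js = butlast js @ [last js]" using ne by simp
qed

theorem proposition1:
  fixes n M :: nat
    and J :: "nat \<Rightarrow> nat"
    and I K :: "nat list \<Rightarrow> nat set"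
    and Phi :: "nat list \<Rightarrow> nat \<Rightarrow> nat \<Rightarrow> real"
    and rp :: "nat list \<Rightarrow> nat"
    and Sigma :: "nat \<Rightarrow> nat \<Rightarrow> real"
  assumes n_pos: "n \<ge> 1"
    and J_ge2: "\<forall>i\<in>{1..M}. J i \<ge> 2"
    and I_root: "I [] = {1..n}"
    and I_union: "\<forall>m<M. \<forall>js\<in>midx J m.
        I js = (\<Union>j\<in>{1..J (Suc m)}. I (js @ [j]))"
    and I_disj: "\<forall>m<M. \<forall>js\<in>midx J m. \<forall>j1\<in>{1..J (Suc m)}. \<forall>j2\<in>{1..J (Suc m)}.
        j1 \<noteq> j2 \<longrightarrow> I (js @ [j1]) \<inter> I (js @ [j2]) = {}"
    and I_order: "\<forall>is\<in>midx J M. \<forall>js\<in>midx J M.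
        (is, js) \<in> lex {(a, b). a < b} \<longrightarrow> (\<forall>a\<in>I js. \<forall>b\<in>I is. b < a)"
    and K_sub: "\<forall>m\<le>M. \<forall>js\<in>midx J m. K js \<subseteq> I js"
    and rp_bounds: "\<forall>m\<le>M. \<forall>js\<in>midx J m. 1 \<le> rp js \<and> rp js \<le> card (K js)"
    and Phi_rank: "\<forall>m\<le>M. \<forall>js\<in>midx J m. \<forall>y::nat \<Rightarrow> real.
        (\<forall>l\<in>K js. (\<Sum>p<rp js. y p * Phi js p l) = 0) \<longrightarrow> (\<forall>p<rp js. y p = 0)"
    and Phi_norm: "\<forall>m\<le>M. \<forall>js\<in>midx J m. \<forall>p<rp js. (\<Sum>l\<in>K js. (Phi js p l)\<^sup>2) = 1"
    and Sigma_pd: "pd_on {1..n} Sigma"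
    and range_cond: "\<forall>m\<in>{1..M}. \<forall>js\<in>midx J m.
        col_space (\<lambda>l p. Phi js p l) (K js) {..<rp js}
          \<inter> ortho_compl (K js) (col_space (mraW Sigma K Phi rp js) (K js) (K js))
        = {\<lambda>_. 0}"
  shows "(\<forall>m\<in>{1..M}. \<forall>js\<in>midx J m. psd_on (K js) (mraW Sigma K Phi rp js))
       \<and> (\<forall>m\<le>M. \<forall>js\<in>midx J m. pd_on {..<rp js} (mraVhat Sigma K Phi rp js))"
proof -
  define D where "D = {1..n}"
  have finD: "finite D" unfolding D_def by simp
  have Isub: "\<forall>js\<in>midx J m. I js \<subseteq> D" if "m \<le> M" for m
    using that
  proof (induction m)
    case 0
    have "js = []" if "js \<in> midx J 0" for js using that unfolding midx_def by simp
    thus ?case using I_root unfolding D_def by auto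
  next
    case (Suc m)
    show ?case
    proof
      fix js assume js: "js \<in> midx J (Suc m)"
      note mb = midx_butlast[OF js]
      have "I (butlast js) \<subseteq> D" using Suc mb by auto
      moreover have "I js \<subseteq> I (butlast js)"
        using I_union[rule_format, of m "butlast js"] Suc.prems mb by (metis Suc_le_lessD UN_upper)
      ultimately show "I js \<subseteq> D" by blast
    qed
  qed
  have KD: "K js \<subseteq> D" if "m \<le> M" "js \<in> midx J m" for m js
    using Isub[OF that(1)] K_sub that by blast
  have finK: "finite (K js)" if "m \<le> M" "js \<in> midx J m" for m js
    using rp_bounds that by (metis card.infinite not_one_le_zero order_trans)
  have main: "\<forall>js\<in>midx J m. psd_on D (mraW Sigma K Phi rp js) \<and> pd_on {..<rp js} (mraVhat Sigma K Phi rp js)"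
    if "m \<le> M" for m
    using that
  proof (induction m)
    case 0
    show ?case
    proof
      fix js assume js: "js \<in> midx J 0"
      hence js0: "js = []" unfolding midx_def by simp
      have pdS: "pd_on D Sigma" using Sigma_pd unfolding D_def .
      have KD0: "K [] \<subseteq> D" using KD[OF 0] js js0 by simp
      have fK: "finite (K [])" using finK[OF 0] js js0 by simp
      have psdK: "psd_on (K []) Sigma" using psd_restrict[OF finD KD0 pd_psd[OF pdS]] .
      have "pd_on {..<rp []} (\<lambda>p q. \<Sum>a\<in>K []. \<Sum>b\<in>K []. Phi [] p a * Sigma a b * Phi [] q b)"
      proof (rule vhat_pd_gen[OF fK])
        show "sym_on (K []) Sigma" using psdK unfolding psd_on_def by simp
        show "\<forall>x. quad_form (K []) Sigma x \<ge> 0" using psdK unfolding psd_on_def by simp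
        show "\<forall>y. (\<forall>l\<in>K []. (\<Sum>p<rp []. y p * Phi [] p l) = 0) \<longrightarrow> (\<forall>p<rp []. y p = 0)"
          using Phi_rank js js0 by blast
        show "\<forall>x\<in>col_space (\<lambda>l p. Phi [] p l) (K []) {..<rp []}. quad_form (K []) Sigma x = 0 \<longrightarrow> (\<forall>l\<in>K []. x l = 0)"
        proof (intro ballI impI)
          fix x l assume q: "quad_form (K []) Sigma x = 0" and l: "l \<in> K []"
          have "quad_form D Sigma (\<lambda>i. if i \<in> K [] then x i else 0) = 0"
            using quad_restrict[OF finD KD0] q by simp
          hence "\<not> (\<exists>i\<in>D. (if i \<in> K [] then x i else 0) \<noteq> 0)"
            using pdS unfolding pd_on_def by force
          moreover have "l \<in> D" using l KD0 by blast
          ultimately have "(if l \<in> K [] then x l else 0) = 0" by blast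
          thus "x l = 0" using l by simp
        qed
      qed
      thus "psd_on D (mraW Sigma K Phi rp js) \<and> pd_on {..<rp js} (mraVhat Sigma K Phi rp js)"
        using pd_psd[OF pdS] js0 unfolding mraVhat_def vhat_def by (simp add: mraW_nil)
    qed
  next
    case (Suc m)
    show ?case
    proof
      fix js assume js: "js \<in> midx J (Suc m)"
      note mb = midx_butlast[OF js]
      define bj where "bj = butlast js"
      have bjm: "bj \<in> midx J m" using mb unfolding bj_def by simp
      have IH: "psd_on D (mraW Sigma K Phi rp bj)" "pd_on {..<rp bj} (mraVhat Sigma K Phi rp bj)"
        using Suc bjm by auto
      have ne: "js \<noteq> []" using js unfolding midx_def by auto
      have KDb: "K bj \<subseteq> D" using KD[of m bj] Suc.prems bjm by simp
      have psdW: "psd_on D (mraW Sigma K Phi rp js)"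
        unfolding mraW_step[OF ne] bj_def[symmetric] corr_def Let_def
        using schur_psd[OF finD KDb IH(1)] IH(2) unfolding mraVhat_def vhat_def by blast
      have KDj: "K js \<subseteq> D" using KD[OF Suc.prems js] .
      have fK: "finite (K js)" using finK[OF Suc.prems js] .
      have psdK: "psd_on (K js) (mraW Sigma K Phi rp js)" using psd_restrict[OF finD KDj psdW] .
      have "pd_on {..<rp js} (mraVhat Sigma K Phi rp js)"
        unfolding mraVhat_def vhat_def
      proof (rule vhat_pd_gen[OF fK])
        show "sym_on (K js) (mraW Sigma K Phi rp js)" using psdK unfolding psd_on_def by simp
        show "\<forall>x. quad_form (K js) (mraW Sigma K Phi rp js) x \<ge> 0" using psdK unfolding psd_on_def by simp
        show "\<forall>y. (\<forall>l\<in>K js. (\<Sum>p<rp js. y p * Phi js p l) = 0) \<longrightarrow> (\<forall>p<rp js. y p = 0)"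
          using Phi_rank js Suc.prems by blast
        show "\<forall>x\<in>col_space (\<lambda>l p. Phi js p l) (K js) {..<rp js}.
           quad_form (K js) (mraW Sigma K Phi rp js) x = 0 \<longrightarrow> (\<forall>l\<in>K js. x l = 0)"
        proof (intro ballI impI)
          fix x l assume xc: "x \<in> col_space (\<lambda>l p. Phi js p l) (K js) {..<rp js}"
            and q: "quad_form (K js) (mraW Sigma K Phi rp js) x = 0" and l: "l \<in> K js"
          have xv: "x \<in> vecs (K js)" using xc unfolding col_space_def by simp
          have "x \<in> ortho_compl (K js) (col_space (mraW Sigma K Phi rp js) (K js) (K js))"
            unfolding ortho_compl_def
          proof (intro CollectI conjI xv ballI)
            fix s assume "s \<in> col_space (mraW Sigma K Phi rp js) (K js) (K js)"
            then obtain y where sy: "\<forall>i\<in>K js. s i = (\<Sum>c\<in>K js. mraW Sigma K Phi rp js i c * y c)"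
              unfolding col_space_def by blast
            have "(\<Sum>i\<in>K js. x i * s i) = (\<Sum>i\<in>K js. \<Sum>c\<in>K js. x i * mraW Sigma K Phi rp js i c * y c)"
              using sy by (intro sum.cong refl) (auto simp: sum_distrib_left mult_ac)
            also have "\<dots> = 0" by (rule psd_zero_bil[OF fK psdK q])
            finally show "(\<Sum>i\<in>K js. x i * s i) = 0" .
          qed
          hence "x \<in> {\<lambda>_. 0}" using range_cond xc js Suc.prems by fastforce
          thus "x l = 0" by simp
        qed
      qed
      thus "psd_on D (mraW Sigma K Phi rp js) \<and> pd_on {..<rp js} (mraVhat Sigma K Phi rp js)"
        using psdW by simp
    qed
  qed
  show ?thesis
  proof
    show "\<forall>m\<in>{1..M}. \<forall>js\<in>midx J m. psd_on (K js) (mraW Sigma K Phi rp js)"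
      using main KD psd_restrict[OF finD] by auto
    show "\<forall>m\<le>M. \<forall>js\<in>midx J m. pd_on {..<rp js} (mraVhat Sigma K Phi rp js)"
      using main by auto
  qed
qed

end
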